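(* Fix $n\ge d+1$ and a realization for which $S_n$ is positive definite. Then \[ \lim_{\gamma\to\infty}\gamma^{2+d/2}\,\frac{16\,T_{n,\gamma}}{n\,\pi^{d/2}}=2b_{1,d}+\widetilde b_{1,d}, \] where \[ b_{1,d}=\frac{1}{n^2}\sum_{j,k=1}^n (Y_{n,j}^\top Y_{n,k})^3,\qquad \widetilde b_{1,d}=\frac{1}{n^2}\sum_{j,k=1}^n Y_{n,j}^\top Y_{n,k}\,\|Y_{n,j}\|^2\,\|Y_{n,k}\|^2 . \]
   Context: Let $X_1,\dots,X_n$ be points of $\mathbb{R}^d$ (realizations of i.i.d. absolutely continuous random vectors). Put $\overline{X}_n=n^{-1}\sum_{j=1}^n X_j$, $S_n=n^{-1}\sum_{j=1}^n (X_j-\overline{X}_n)(X_j-\overline{X}_n)^\top$, let $S_n^{-1/2}$ be the symmetric positive definite square root of $S_n^{-1}$, and $Y_{n,j}=S_n^{-1/2}(X_j-\overline{X}_n)$. Let $M_n(t)=n^{-1}\sum_{j=1}^n \exp(t^\top Y_{n,j})$ with gradient $M_n'$, $w_\gamma(t)=\exp(-\gamma\|t\|^2)$, and $T_{n,\gamma}=n\int_{\mathbb{R}^d}\|M_n'(t)-tM_n(t)\|^2w_\gamma(t)\,\mathrm{d}t$. *)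

theory Defs
  imports "HOL-Analysis.Analysis"
begin

text \<open>Points X_1,...,X_n of R^d are modelled as X :: nat => real^'d, indices 1..n.\<close>

definition outer :: "real^'d \<Rightarrow> real^'d \<Rightarrow> real^'d^'d" where
  "outer v w = (\<chi> i k. v $ i * w $ k)"

definition posdef :: "real^'d^'d \<Rightarrow> bool" where
  "posdef A \<longleftrightarrow> transpose A = A \<and> (\<forall>x. x \<noteq> 0 \<longrightarrow> x \<bullet> (A *v x) > 0)"

definition sample_mean :: "nat \<Rightarrow> (nat \<Rightarrow> real^'d) \<Rightarrow> real^'d" where
  "sample_mean n X = (1 / real n) *\<^sub>R (\<Sum>j=1..n. X j)"

definition sample_cov :: "nat \<Rightarrow> (nat \<Rightarrow> real^'d) \<Rightarrow> real^'d^'d" where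
  "sample_cov n X = (1 / real n) *\<^sub>R
     (\<Sum>j=1..n. outer (X j - sample_mean n X) (X j - sample_mean n X))"

definition inv_sqrt :: "real^'d^'d \<Rightarrow> real^'d^'d" where
  "inv_sqrt S = (THE R. posdef R \<and> R ** R = matrix_inv S)"

definition scaled_res :: "nat \<Rightarrow> (nat \<Rightarrow> real^'d) \<Rightarrow> nat \<Rightarrow> real^'d" where
  "scaled_res n X j = inv_sqrt (sample_cov n X) *v (X j - sample_mean n X)"

definition emp_mgf :: "nat \<Rightarrow> (nat \<Rightarrow> real^'d) \<Rightarrow> real^'d \<Rightarrow> real" where
  "emp_mgf n X t = (1 / real n) * (\<Sum>j=1..n. exp (t \<bullet> scaled_res n X j))"

definition grad :: "(real^'d \<Rightarrow> real) \<Rightarrow> real^'d \<Rightarrow> real^'d" where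
  "grad f t = (THE g. (f has_derivative (\<lambda>h. g \<bullet> h)) (at t))"

definition test_stat :: "nat \<Rightarrow> (nat \<Rightarrow> real^'d) \<Rightarrow> real \<Rightarrow> real" where
  "test_stat n X \<gamma> = real n * integral UNIV
     (\<lambda>t::real^'d. (norm (grad (emp_mgf n X) t - emp_mgf n X t *\<^sub>R t))\<^sup>2 * exp (- \<gamma> * (norm t)\<^sup>2))"

definition b1 :: "nat \<Rightarrow> (nat \<Rightarrow> real^'d) \<Rightarrow> real" where
  "b1 n X = (1 / (real n)\<^sup>2) * (\<Sum>j=1..n. \<Sum>k=1..n. (scaled_res n X j \<bullet> scaled_res n X k) ^ 3)"

definition b1_tilde :: "nat \<Rightarrow> (nat \<Rightarrow> real^'d) \<Rightarrow> real" where
  "b1_tilde n X = (1 / (real n)\<^sup>2) * (\<Sum>j=1..n. \<Sum>k=1..n.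
      (scaled_res n X j \<bullet> scaled_res n X k) * (norm (scaled_res n X j))\<^sup>2 * (norm (scaled_res n X k))\<^sup>2)"

end

theory Submission
  imports Defs "HOL-Probability.Probability" "HOL-Real_Asymp.Real_Asymp"
begin


definition G1 :: "real \<Rightarrow> real \<Rightarrow> real" where
  "G1 \<gamma> c = sqrt (pi / \<gamma>) * exp (c\<^sup>2 / (4 * \<gamma>))"

lemma gauss_eq_nd:
  assumes g: "\<gamma> > 0"
  shows "exp (c * x - \<gamma> * x\<^sup>2) = G1 \<gamma> c * normal_density (c / (2*\<gamma>)) (sqrt (1/(2*\<gamma>))) x"
proof -
  have "exp (c * x - \<gamma> * x\<^sup>2) = exp (c\<^sup>2 / (4 * \<gamma>)) * exp (-(x - c / (2*\<gamma>))\<^sup>2/ (2 * (sqrt (1/(2*\<gamma>)))\<^sup>2))"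
    unfolding exp_add[symmetric] using g by (simp add: field_simps power2_eq_square)
  moreover have "sqrt (pi / \<gamma>) * (1 / sqrt (2 * pi * (sqrt (1/(2*\<gamma>)))\<^sup>2)) = 1"
    using g by (simp add: real_sqrt_divide field_simps)
  moreover have "G1 \<gamma> c * normal_density (c / (2*\<gamma>)) (sqrt (1/(2*\<gamma>))) x =
     (sqrt (pi / \<gamma>) * (1 / sqrt (2 * pi * (sqrt (1/(2*\<gamma>)))\<^sup>2))) *
     (exp (c\<^sup>2 / (4 * \<gamma>)) * exp (-(x - c / (2*\<gamma>))\<^sup>2/ (2 * (sqrt (1/(2*\<gamma>)))\<^sup>2)))"
    unfolding G1_def normal_density_def by (simp only: ac_simps)
  ultimately show ?thesis by simp
qed

lemma gauss1_0:
  assumes g: "\<gamma> > 0"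
  shows "has_bochner_integral lborel (\<lambda>x. exp (c * x - \<gamma> * x\<^sup>2)) (G1 \<gamma> c)"
proof -
  have s: "sqrt (1/(2*\<gamma>)) > 0" using g by simp
  have "has_bochner_integral lborel (\<lambda>x. G1 \<gamma> c * normal_density (c / (2*\<gamma>)) (sqrt (1/(2*\<gamma>))) x) (G1 \<gamma> c * 1)"
    apply (rule has_bochner_integral_mult_right)
    using integrable_normal_density[OF s] integral_normal_density[OF s]
    by (metis has_bochner_integral_integrable)
  then show ?thesis using gauss_eq_nd[OF g] by simp
qed

lemma gauss1_1:
  assumes g: "\<gamma> > 0"
  shows "has_bochner_integral lborel (\<lambda>x. x * exp (c * x - \<gamma> * x\<^sup>2)) (c / (2*\<gamma>) * G1 \<gamma> c)"
proof -
  have s: "sqrt (1/(2*\<gamma>)) > 0" using g by simp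
  have "has_bochner_integral lborel (\<lambda>x. G1 \<gamma> c * (normal_density (c / (2*\<gamma>)) (sqrt (1/(2*\<gamma>))) x * x)) (G1 \<gamma> c * (c / (2*\<gamma>)))"
    by (rule has_bochner_integral_mult_right) (rule normal_moment_nz_1[OF s])
  moreover have "(\<lambda>x. x * exp (c * x - \<gamma> * x\<^sup>2)) = (\<lambda>x. G1 \<gamma> c * (normal_density (c / (2*\<gamma>)) (sqrt (1/(2*\<gamma>))) x * x))"
    using gauss_eq_nd[OF g] by (auto simp: fun_eq_iff)
  ultimately show ?thesis by (simp add: ac_simps)
qed

lemma gauss1_2:
  assumes g: "\<gamma> > 0"
  shows "has_bochner_integral lborel (\<lambda>x. x\<^sup>2 * exp (c * x - \<gamma> * x\<^sup>2)) ((c\<^sup>2 / (4*\<gamma>\<^sup>2) + 1/(2*\<gamma>)) * G1 \<gamma> c)"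
proof -
  define \<mu> where "\<mu> = c / (2*\<gamma>)"
  define \<sigma> where "\<sigma> = sqrt (1/(2*\<gamma>))"
  have s: "\<sigma> > 0" using g by (simp add: \<sigma>_def)
  have e: "has_bochner_integral lborel (\<lambda>x. normal_density \<mu> \<sigma> x * (x - \<mu>) ^ 2) (\<sigma>\<^sup>2)"
    using normal_moment_even[OF s, where k=1 and \<mu>=\<mu>] by (simp add: power2_eq_square)
  have o: "has_bochner_integral lborel (\<lambda>x. 2 * \<mu> * (normal_density \<mu> \<sigma> x * x)) (2 * \<mu> * \<mu>)"
    by (rule has_bochner_integral_mult_right) (rule normal_moment_nz_1[OF s])
  have z: "has_bochner_integral lborel (\<lambda>x. \<mu>\<^sup>2 * normal_density \<mu> \<sigma> x) (\<mu>\<^sup>2 * 1)"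
    apply (rule has_bochner_integral_mult_right)
    using integrable_normal_density[OF s] integral_normal_density[OF s]
    by (metis has_bochner_integral_integrable)
  have "has_bochner_integral lborel (\<lambda>x. normal_density \<mu> \<sigma> x * (x - \<mu>) ^ 2 + 2 * \<mu> * (normal_density \<mu> \<sigma> x * x) - \<mu>\<^sup>2 * normal_density \<mu> \<sigma> x) (\<sigma>\<^sup>2 + 2 * \<mu> * \<mu> - \<mu>\<^sup>2 * 1)"
    by (intro has_bochner_integral_diff has_bochner_integral_add e o z)
  then have "has_bochner_integral lborel (\<lambda>x. normal_density \<mu> \<sigma> x * x\<^sup>2) (\<sigma>\<^sup>2 + \<mu>\<^sup>2)"
    by (simp add: power2_eq_square algebra_simps)
  then have "has_bochner_integral lborel (\<lambda>x. G1 \<gamma> c * (normal_density \<mu> \<sigma> x * x\<^sup>2)) (G1 \<gamma> c * (\<sigma>\<^sup>2 + \<mu>\<^sup>2))"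
    by (rule has_bochner_integral_mult_right)
  moreover have "\<sigma>\<^sup>2 + \<mu>\<^sup>2 = c\<^sup>2 / (4*\<gamma>\<^sup>2) + 1/(2*\<gamma>)"
    using g by (simp add: \<sigma>_def \<mu>_def power2_eq_square field_simps)
  moreover have "(\<lambda>x. x\<^sup>2 * exp (c * x - \<gamma> * x\<^sup>2)) = (\<lambda>x. G1 \<gamma> c * (normal_density \<mu> \<sigma> x * x\<^sup>2))"
    using gauss_eq_nd[OF g] by (auto simp: fun_eq_iff \<mu>_def \<sigma>_def)
  ultimately show ?thesis by (simp add: ac_simps)
qed


lemma lborel_integral_prod:
  fixes f :: "'a::euclidean_space \<Rightarrow> real \<Rightarrow> real"
  assumes int: "\<And>b. b \<in> Basis \<Longrightarrow> integrable lborel (f b)"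
  shows "has_bochner_integral lborel (\<lambda>x::'a. \<Prod>b\<in>Basis. f b (x \<bullet> b)) (\<Prod>b\<in>Basis. integral\<^sup>L lborel (f b))"
proof -
  interpret product_sigma_finite "\<lambda>_::'a. lborel :: real measure"
    by standard
  define \<phi> where "\<phi> = (\<lambda>g::'a \<Rightarrow> real. \<Sum>b\<in>Basis. g b *\<^sub>R b)"
  have phim[measurable]: "\<phi> \<in> measurable (\<Pi>\<^sub>M b\<in>Basis. lborel) borel"
    unfolding \<phi>_def by measurable
  have fm[measurable]: "\<And>b. b \<in> Basis \<Longrightarrow> f b \<in> borel_measurable borel"
    using int by (simp add: borel_measurable_integrable)
  have hm[measurable]: "(\<lambda>x::'a. \<Prod>b\<in>Basis. f b (x \<bullet> b)) \<in> borel_measurable borel"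
    by measurable
  have comp: "(\<Prod>b\<in>Basis. f b (\<phi> g \<bullet> b)) = (\<Prod>b\<in>Basis. f b (g b))" for g
  proof (rule prod.cong[OF refl])
    fix b :: 'a assume b: "b \<in> Basis"
    have "\<phi> g \<bullet> b = (\<Sum>b'\<in>Basis. g b' * (b' \<bullet> b))"
      unfolding \<phi>_def by (simp add: inner_sum_left)
    also have "\<dots> = g b"
      using b by (simp add: inner_Basis if_distrib cong: if_cong)
    finally show "f b (\<phi> g \<bullet> b) = f b (g b)" by simp
  qed
  have i1: "integrable (\<Pi>\<^sub>M b\<in>Basis. lborel) (\<lambda>g. \<Prod>b\<in>Basis. f b (g b))"
    by (rule product_integrable_prod) (auto intro: int)
  have i2: "integral\<^sup>L (\<Pi>\<^sub>M b\<in>Basis. lborel) (\<lambda>g. \<Prod>b\<in>Basis. f b (g b)) = (\<Prod>b\<in>Basis. integral\<^sup>L lborel (f b))"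
    by (rule product_integral_prod) (auto intro: int)
  have "integrable lborel (\<lambda>x::'a. \<Prod>b\<in>Basis. f b (x \<bullet> b))"
    unfolding lborel_eq[where 'a='a] \<phi>_def[symmetric]
    by (subst integrable_distr_eq) (auto simp: comp i1)
  moreover have "integral\<^sup>L lborel (\<lambda>x::'a. \<Prod>b\<in>Basis. f b (x \<bullet> b)) = (\<Prod>b\<in>Basis. integral\<^sup>L lborel (f b))"
    unfolding lborel_eq[where 'a='a] \<phi>_def[symmetric]
    by (subst integral_distr) (auto simp: comp i2)
  ultimately show ?thesis by (simp add: has_bochner_integral_iff)
qed


definition GZ :: "real \<Rightarrow> 'a::euclidean_space \<Rightarrow> real" where
  "GZ \<gamma> a = (\<Prod>b\<in>Basis. G1 \<gamma> (a \<bullet> b))"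

lemma norm_sq_basis:
  fixes t :: "'a::euclidean_space"
  shows "(norm t)\<^sup>2 = (\<Sum>b\<in>Basis. (t \<bullet> b)\<^sup>2)"
  unfolding power2_norm_eq_inner by (subst euclidean_inner) (simp add: power2_eq_square)

lemma exp_split:
  fixes t a :: "'a::euclidean_space"
  shows "exp (t \<bullet> a - \<gamma> * (norm t)\<^sup>2) = (\<Prod>b\<in>Basis. exp ((a \<bullet> b) * (t \<bullet> b) - \<gamma> * (t \<bullet> b)\<^sup>2))"
proof -
  have "t \<bullet> a - \<gamma> * (norm t)\<^sup>2 = (\<Sum>b\<in>Basis. (a \<bullet> b) * (t \<bullet> b) - \<gamma> * (t \<bullet> b)\<^sup>2)"
    by (simp add: euclidean_inner[of t a] norm_sq_basis sum_subtractf sum_distrib_left mult.commute)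
  then show ?thesis by (simp add: exp_sum)
qed

lemma gaussd_0:
  fixes a :: "'a::euclidean_space"
  assumes g: "\<gamma> > 0"
  shows "has_bochner_integral lborel (\<lambda>t::'a. exp (t \<bullet> a - \<gamma> * (norm t)\<^sup>2)) (GZ \<gamma> a)"
proof -
  have "has_bochner_integral lborel (\<lambda>t::'a. \<Prod>b\<in>Basis. (\<lambda>x. exp ((a \<bullet> b) * x - \<gamma> * x\<^sup>2)) (t \<bullet> b))
      (\<Prod>b\<in>Basis. integral\<^sup>L lborel (\<lambda>x. exp ((a \<bullet> b) * x - \<gamma> * x\<^sup>2)))"
    by (rule lborel_integral_prod) (rule integrable.intros[OF gauss1_0[OF g]])
  moreover have "(\<Prod>b\<in>Basis. integral\<^sup>L lborel (\<lambda>x. exp ((a \<bullet> b) * x - \<gamma> * x\<^sup>2))) = GZ \<gamma> a"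
    unfolding GZ_def using gauss1_0[OF g] by (intro prod.cong refl) (simp add: has_bochner_integral_integral_eq)
  ultimately show ?thesis by (simp add: exp_split)
qed

lemma gaussd_1:
  fixes a :: "'a::euclidean_space"
  assumes g: "\<gamma> > 0" and i: "i \<in> Basis"
  shows "has_bochner_integral lborel (\<lambda>t::'a. (t \<bullet> i) * exp (t \<bullet> a - \<gamma> * (norm t)\<^sup>2)) ((a \<bullet> i) / (2*\<gamma>) * GZ \<gamma> a)"
proof -
  define f where "f = (\<lambda>b x. (if b = i then x else 1) * exp ((a \<bullet> b) * x - \<gamma> * x\<^sup>2))"
  have I: "has_bochner_integral lborel (f b) ((if b = i then (a \<bullet> b) / (2*\<gamma>) else 1) * G1 \<gamma> (a \<bullet> b))" for b
    unfolding f_def using gauss1_0[OF g] gauss1_1[OF g] by auto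
  have "has_bochner_integral lborel (\<lambda>t::'a. \<Prod>b\<in>Basis. f b (t \<bullet> b)) (\<Prod>b\<in>Basis. integral\<^sup>L lborel (f b))"
    by (rule lborel_integral_prod) (rule integrable.intros[OF I])
  moreover have "(\<Prod>b\<in>Basis. integral\<^sup>L lborel (f b)) = (\<Prod>b\<in>Basis. (if b = i then (a \<bullet> b) / (2*\<gamma>) else 1) * G1 \<gamma> (a \<bullet> b))"
    using I by (intro prod.cong refl) (simp add: has_bochner_integral_integral_eq)
  moreover have "\<dots> = (a \<bullet> i) / (2*\<gamma>) * GZ \<gamma> a"
    unfolding GZ_def prod.distrib using i by (simp add: prod.delta)
  moreover have "(\<Prod>b\<in>Basis. f b (t \<bullet> b)) = (t \<bullet> i) * exp (t \<bullet> a - \<gamma> * (norm t)\<^sup>2)" for t :: 'a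
    unfolding f_def prod.distrib exp_split using i by (simp add: prod.delta)
  ultimately show ?thesis by simp
qed

lemma gaussd_2:
  fixes a :: "'a::euclidean_space"
  assumes g: "\<gamma> > 0" and i: "i \<in> Basis"
  shows "has_bochner_integral lborel (\<lambda>t::'a. (t \<bullet> i)\<^sup>2 * exp (t \<bullet> a - \<gamma> * (norm t)\<^sup>2)) (((a \<bullet> i)\<^sup>2 / (4*\<gamma>\<^sup>2) + 1/(2*\<gamma>)) * GZ \<gamma> a)"
proof -
  define f where "f = (\<lambda>b x. (if b = i then x\<^sup>2 else 1) * exp ((a \<bullet> b) * x - \<gamma> * x\<^sup>2))"
  have I: "has_bochner_integral lborel (f b) ((if b = i then (a \<bullet> b)\<^sup>2 / (4*\<gamma>\<^sup>2) + 1/(2*\<gamma>) else 1) * G1 \<gamma> (a \<bullet> b))" for b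
    unfolding f_def using gauss1_0[OF g] gauss1_2[OF g] by auto
  have "has_bochner_integral lborel (\<lambda>t::'a. \<Prod>b\<in>Basis. f b (t \<bullet> b)) (\<Prod>b\<in>Basis. integral\<^sup>L lborel (f b))"
    by (rule lborel_integral_prod) (rule integrable.intros[OF I])
  moreover have "(\<Prod>b\<in>Basis. integral\<^sup>L lborel (f b)) = (\<Prod>b\<in>Basis. (if b = i then (a \<bullet> b)\<^sup>2 / (4*\<gamma>\<^sup>2) + 1/(2*\<gamma>) else 1) * G1 \<gamma> (a \<bullet> b))"
    using I by (intro prod.cong refl) (simp add: has_bochner_integral_integral_eq)
  moreover have "\<dots> = ((a \<bullet> i)\<^sup>2 / (4*\<gamma>\<^sup>2) + 1/(2*\<gamma>)) * GZ \<gamma> a"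
    unfolding GZ_def prod.distrib using i by (simp add: prod.delta)
  moreover have "(\<Prod>b\<in>Basis. f b (t \<bullet> b)) = (t \<bullet> i)\<^sup>2 * exp (t \<bullet> a - \<gamma> * (norm t)\<^sup>2)" for t :: 'a
    unfolding f_def prod.distrib exp_split using i by (simp add: prod.delta)
  ultimately show ?thesis by simp
qed

lemma gaussd_lin:
  fixes a c :: "'a::euclidean_space"
  assumes g: "\<gamma> > 0"
  shows "has_bochner_integral lborel (\<lambda>t::'a. (t \<bullet> c) * exp (t \<bullet> a - \<gamma> * (norm t)\<^sup>2)) ((a \<bullet> c) / (2*\<gamma>) * GZ \<gamma> a)"
proof -
  have h1: "has_bochner_integral lborel (\<lambda>t::'a. \<Sum>i\<in>Basis. (c \<bullet> i) * ((t \<bullet> i) * exp (t \<bullet> a - \<gamma> * (norm t)\<^sup>2)))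
     (\<Sum>i\<in>Basis. (c \<bullet> i) * ((a \<bullet> i) / (2*\<gamma>) * GZ \<gamma> a))"
    by (rule has_bochner_integral_sum, rule has_bochner_integral_mult_right, rule gaussd_1[OF g])
  moreover have h2: "(\<Sum>i\<in>Basis. (c \<bullet> i) * ((a \<bullet> i) / (2*\<gamma>) * GZ \<gamma> a)) = (a \<bullet> c) / (2*\<gamma>) * GZ \<gamma> a"
  proof -
    have "(\<Sum>i\<in>Basis. (c \<bullet> i) * ((a \<bullet> i) / (2*\<gamma>) * GZ \<gamma> a)) = (\<Sum>i\<in>Basis. (a \<bullet> i) * (c \<bullet> i)) / (2*\<gamma>) * GZ \<gamma> a"
      by (simp only: sum_divide_distrib sum_distrib_right) (intro sum.cong refl; simp add: field_simps)
    then show ?thesis by (simp add: euclidean_inner[of a c])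
  qed
  moreover have pw: "(\<Sum>i\<in>Basis. (c \<bullet> i) * ((t \<bullet> i) * exp (t \<bullet> a - \<gamma> * (norm t)\<^sup>2))) = (t \<bullet> c) * exp (t \<bullet> a - \<gamma> * (norm t)\<^sup>2)" for t :: 'a
  proof -
    have "(t \<bullet> c) * exp (t \<bullet> a - \<gamma> * (norm t)\<^sup>2) = (\<Sum>i\<in>Basis. (t \<bullet> i) * (c \<bullet> i)) * exp (t \<bullet> a - \<gamma> * (norm t)\<^sup>2)"
      by (simp only: euclidean_inner[of t c])
    also have "\<dots> = (\<Sum>i\<in>Basis. (c \<bullet> i) * ((t \<bullet> i) * exp (t \<bullet> a - \<gamma> * (norm t)\<^sup>2)))"
      by (simp only: sum_distrib_right) (intro sum.cong refl; simp only: ac_simps)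
    finally show ?thesis by (rule sym)
  qed
  moreover have h3: "(\<lambda>t::'a. \<Sum>i\<in>Basis. (c \<bullet> i) * ((t \<bullet> i) * exp (t \<bullet> a - \<gamma> * (norm t)\<^sup>2))) = (\<lambda>t. (t \<bullet> c) * exp (t \<bullet> a - \<gamma> * (norm t)\<^sup>2))"
    by (intro ext pw)
  show ?thesis using h1 unfolding h2 h3 .
qed

lemma gaussd_sq:
  fixes a :: "'a::euclidean_space"
  assumes g: "\<gamma> > 0"
  shows "has_bochner_integral lborel (\<lambda>t::'a. (norm t)\<^sup>2 * exp (t \<bullet> a - \<gamma> * (norm t)\<^sup>2))
     (((norm a)\<^sup>2 / (4*\<gamma>\<^sup>2) + real DIM('a)/(2*\<gamma>)) * GZ \<gamma> a)"
proof -
  have h1: "has_bochner_integral lborel (\<lambda>t::'a. \<Sum>i\<in>Basis. (t \<bullet> i)\<^sup>2 * exp (t \<bullet> a - \<gamma> * (norm t)\<^sup>2))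
     (\<Sum>i\<in>Basis. ((a \<bullet> i)\<^sup>2 / (4*\<gamma>\<^sup>2) + 1/(2*\<gamma>)) * GZ \<gamma> a)"
    by (rule has_bochner_integral_sum, rule gaussd_2[OF g])
  moreover have h2: "(\<Sum>i\<in>Basis. ((a \<bullet> i)\<^sup>2 / (4*\<gamma>\<^sup>2) + 1/(2*\<gamma>)) * GZ \<gamma> a) = ((norm a)\<^sup>2 / (4*\<gamma>\<^sup>2) + real DIM('a)/(2*\<gamma>)) * GZ \<gamma> a"
    by (simp add: norm_sq_basis[of a] distrib_right sum.distrib sum_distrib_right sum_divide_distrib)
  moreover have pw: "(\<Sum>i\<in>Basis. (t \<bullet> i)\<^sup>2 * exp (t \<bullet> a - \<gamma> * (norm t)\<^sup>2)) = (norm t)\<^sup>2 * exp (t \<bullet> a - \<gamma> * (norm t)\<^sup>2)" for t :: 'a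
    by (simp add: norm_sq_basis[of t] sum_distrib_right)
  moreover have h3: "(\<lambda>t::'a. \<Sum>i\<in>Basis. (t \<bullet> i)\<^sup>2 * exp (t \<bullet> a - \<gamma> * (norm t)\<^sup>2)) = (\<lambda>t. (norm t)\<^sup>2 * exp (t \<bullet> a - \<gamma> * (norm t)\<^sup>2))"
    by (intro ext pw)
  show ?thesis using h1 unfolding h2 h3 .
qed

lemma GZ_eq:
  fixes a :: "'a::euclidean_space"
  shows "GZ \<gamma> a = sqrt (pi/\<gamma>) ^ DIM('a) * exp ((norm a)\<^sup>2 / (4*\<gamma>))"
  unfolding GZ_def G1_def prod.distrib
  by (simp add: exp_sum[symmetric] sum_divide_distrib[symmetric] norm_sq_basis[of a])


definition symm :: "real^'n^'n \<Rightarrow> bool" where "symm A \<longleftrightarrow> transpose A = A"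

lemma symm_inner: "symm A \<Longrightarrow> x \<bullet> (A *v y) = (A *v x) \<bullet> y"
  unfolding symm_def by (metis dot_lmul_matrix transpose_matrix_vector)

lemma eig_exists:
  fixes A :: "real^'n^'n"
  assumes sym: "symm A" and sub: "subspace V" and ne: "V \<noteq> {0}" and inv: "\<And>x. x \<in> V \<Longrightarrow> A *v x \<in> V"
  shows "\<exists>v l. v \<in> V \<and> norm v = 1 \<and> A *v v = l *\<^sub>R v"
proof -
  define K where "K = V \<inter> sphere 0 1"
  define f where "f = (\<lambda>x::real^'n. x \<bullet> (A *v x))"
  have "compact K" unfolding K_def
    using closed_subspace[OF sub] compact_sphere by (metis compact_Int_closed inf_commute)
  moreover have "K \<noteq> {}"
  proof -
    obtain x where x: "x \<in> V" "x \<noteq> 0" using ne sub subspace_0 by blast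
    then have "(1 / norm x) *\<^sub>R x \<in> K" unfolding K_def using sub by (simp add: subspace_scale)
    then show ?thesis by blast
  qed
  moreover have "continuous_on K f" unfolding f_def by (intro continuous_intros)
  ultimately obtain v where vK: "v \<in> K" and vmax: "\<And>y. y \<in> K \<Longrightarrow> f y \<le> f v"
    using continuous_attains_sup by metis
  define l where "l = f v"
  have vV: "v \<in> V" and nv: "norm v = 1" using vK by (auto simp: K_def)
  have bound: "f y \<le> l * (norm y)\<^sup>2" if yV: "y \<in> V" for y
  proof (cases "y = 0")
    case True then show ?thesis by (simp add: f_def)
  next
    case False
    define u where "u = (1 / norm y) *\<^sub>R y"
    have "u \<in> K" unfolding K_def u_def using yV sub False by (simp add: subspace_scale)
    then have "f u \<le> l" using vmax l_def by simp
    moreover have "f y = (norm y)\<^sup>2 * f u" unfolding u_def f_def using False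
      by (simp add: matrix_vector_mult_scaleR power2_eq_square field_simps)
    ultimately show ?thesis using False
      by (simp add: mult_left_mono mult.commute)
  qed
  define w where "w = A *v v - l *\<^sub>R v"
  have wV: "w \<in> V" unfolding w_def using inv vV sub by (simp add: subspace_diff subspace_scale)
  have wAv: "w \<bullet> (A *v v) - l * (v \<bullet> w) = w \<bullet> w"
  proof -
    have vv: "v \<bullet> v = 1" using nv by (simp add: norm_eq_1)
    show ?thesis unfolding w_def l_def f_def
      by (simp add: inner_diff_left inner_diff_right inner_commute vv algebra_simps power2_eq_square)
  qed
  have key: "2 * t * (w \<bullet> w) + t\<^sup>2 * (f w - l * (w \<bullet> w)) \<le> 0" for t
  proof -
    have "v + t *\<^sub>R w \<in> V" using vV wV sub by (simp add: subspace_add subspace_scale)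
    then have "f (v + t *\<^sub>R w) \<le> l * (norm (v + t *\<^sub>R w))\<^sup>2" by (rule bound)
    moreover have "f (v + t *\<^sub>R w) = f v + 2 * t * (w \<bullet> (A *v v)) + t\<^sup>2 * f w"
      unfolding f_def using symm_inner[OF sym, of v w]
      by (simp add: matrix_vector_right_distrib matrix_vector_mult_scaleR inner_add_left inner_add_right
          power2_eq_square algebra_simps inner_commute)
    moreover have "(norm (v + t *\<^sub>R w))\<^sup>2 = 1 + 2 * t * (v \<bullet> w) + t\<^sup>2 * (w \<bullet> w)"
    proof -
      have vv: "v \<bullet> v = 1" using nv by (simp add: norm_eq_1)
      show ?thesis by (simp only: power2_norm_eq_inner)
        (simp add: inner_add_left inner_add_right vv power2_eq_square algebra_simps inner_commute)
    qed
    ultimately have "f v + 2 * t * (w \<bullet> (A *v v)) + t\<^sup>2 * f w \<le> l * (1 + 2 * t * (v \<bullet> w) + t\<^sup>2 * (w \<bullet> w))"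
      by simp
    then have "2 * t * (w \<bullet> (A *v v) - l * (v \<bullet> w)) + t\<^sup>2 * (f w - l * (w \<bullet> w)) \<le> 0"
      unfolding l_def by (simp add: algebra_simps)
    then show ?thesis using wAv by simp
  qed
  have "w = 0"
  proof (rule ccontr)
    assume "w \<noteq> 0"
    then have pw: "w \<bullet> w > 0" by simp
    define C where "C = f w - l * (w \<bullet> w)"
    define t where "t = (w \<bullet> w) / (\<bar>C\<bar> + 1)"
    have tpos: "t > 0" unfolding t_def using pw by simp
    have "t * \<bar>C\<bar> < w \<bullet> w" unfolding t_def using pw
      by (simp add: field_simps)
    then have "t * (t * \<bar>C\<bar>) < t * (w \<bullet> w)" using tpos by simp
    moreover have "- (t\<^sup>2 * \<bar>C\<bar>) \<le> t\<^sup>2 * C"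
    proof -
      have "t\<^sup>2 * (- \<bar>C\<bar>) \<le> t\<^sup>2 * C" by (rule mult_left_mono) auto
      then show ?thesis by simp
    qed
    moreover have "t * (w \<bullet> w) > 0" using tpos pw by simp
    moreover have "t\<^sup>2 * \<bar>C\<bar> = t * (t * \<bar>C\<bar>)" by (simp add: power2_eq_square)
    moreover have "2 * t * (w \<bullet> w) = 2 * (t * (w \<bullet> w))" by simp
    ultimately have "2 * t * (w \<bullet> w) + t\<^sup>2 * C > 0" by linarith
    with key[of t] show False unfolding C_def by simp
  qed
  then have "A *v v = l *\<^sub>R v" unfolding w_def by simp
  then show ?thesis using vV nv by blast
qed


definition eigbasis :: "real^'n^'n \<Rightarrow> (real^'n) set \<Rightarrow> (real^'n) set \<Rightarrow> bool" where
  "eigbasis A V B \<longleftrightarrow> B \<subseteq> V \<and> finite B \<and> (\<forall>b\<in>B. norm b = 1 \<and> (\<exists>l. A *v b = l *\<^sub>R b))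
     \<and> (\<forall>b\<in>B. \<forall>c\<in>B. b \<noteq> c \<longrightarrow> b \<bullet> c = 0) \<and> span B = V"

lemma spectral_sub:
  fixes A :: "real^'n^'n"
  assumes sym: "symm A"
  shows "subspace V \<Longrightarrow> (\<forall>x\<in>V. A *v x \<in> V) \<Longrightarrow> \<exists>B. eigbasis A V B"
proof (induction "dim V" arbitrary: V rule: less_induct)
  case less
  show ?case
  proof (cases "V = {0}")
    case True
    then show ?thesis unfolding eigbasis_def by (intro exI[of _ "{}"]) auto
  next
    case False
    obtain v l where vV: "v \<in> V" and nv: "norm v = 1" and Av: "A *v v = l *\<^sub>R v"
      using eig_exists[OF sym less.prems(1) False] less.prems(2) by blast
    have vv: "v \<bullet> v = 1" using nv by (simp add: norm_eq_1)
    define W where "W = V \<inter> {y. orthogonal v y}"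
    have subW: "subspace W" unfolding W_def
      by (rule subspace_inter[OF less.prems(1) subspace_orthogonal_to_vector])
    have invW: "\<forall>x\<in>W. A *v x \<in> W"
    proof
      fix x assume "x \<in> W"
      then have xV: "x \<in> V" and xv: "v \<bullet> x = 0" by (auto simp: W_def orthogonal_def)
      have "v \<bullet> (A *v x) = (A *v v) \<bullet> x" by (rule symm_inner[OF sym])
      also have "\<dots> = 0" using Av xv by simp
      finally show "A *v x \<in> W" using less.prems(2) xV by (auto simp: W_def orthogonal_def)
    qed
    have "v \<notin> W" using vv by (auto simp: W_def orthogonal_def)
    then have "W \<subset> V" using vV by (auto simp: W_def)
    then have "dim W < dim V"
    proof -
      have sW: "span W = W" and sV: "span V = V" using subW less.prems(1) by simp_all
      have "span W \<subset> span V" unfolding sW sV by (rule \<open>W \<subset> V\<close>)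
      then show ?thesis by (rule dim_psubset)
    qed
    then obtain B' where B': "eigbasis A W B'" using less.hyps[OF _ subW invW] by blast
    define B where "B = insert v B'"
    have B'W: "B' \<subseteq> W" and fB': "finite B'" and spB': "span B' = W" using B' by (auto simp: eigbasis_def)
    have vnB': "v \<notin> B'" using B'W vv by (auto simp: W_def orthogonal_def)
    have "B \<subseteq> V" unfolding B_def using B'W vV by (auto simp: W_def)
    moreover have "finite B" unfolding B_def using fB' by simp
    moreover have "\<forall>b\<in>B. norm b = 1 \<and> (\<exists>l. A *v b = l *\<^sub>R b)"
      unfolding B_def using B' nv Av by (auto simp: eigbasis_def)
    moreover have "\<forall>b\<in>B. \<forall>c\<in>B. b \<noteq> c \<longrightarrow> b \<bullet> c = 0"
      unfolding B_def using B' B'W by (auto simp: eigbasis_def W_def orthogonal_def inner_commute)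
    moreover have "span B = V"
    proof
      show "span B \<subseteq> V" by (rule span_minimal[OF \<open>B \<subseteq> V\<close> less.prems(1)])
      show "V \<subseteq> span B"
      proof
        fix x assume xV: "x \<in> V"
        have "x - (v \<bullet> x) *\<^sub>R v \<in> W"
          using xV vV less.prems(1) vv
          by (auto simp: W_def orthogonal_def subspace_diff subspace_scale inner_diff_right)
        then have "x - (v \<bullet> x) *\<^sub>R v \<in> span B" using spB' span_mono[of B' B] B_def by auto
        moreover have "(v \<bullet> x) *\<^sub>R v \<in> span B" unfolding B_def by (intro span_scale span_base) simp
        ultimately have "(x - (v \<bullet> x) *\<^sub>R v) + (v \<bullet> x) *\<^sub>R v \<in> span B" by (rule span_add)
        then show "x \<in> span B" by simp
      qed
    qed
    ultimately show ?thesis unfolding eigbasis_def by blast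
  qed
qed

lemma eig_expand:
  assumes "eigbasis A UNIV B"
  shows "x = (\<Sum>b\<in>B. (b \<bullet> x) *\<^sub>R b)"
proof -
  have fB: "finite B" and on: "\<forall>b\<in>B. \<forall>c\<in>B. b \<noteq> c \<longrightarrow> b \<bullet> c = 0" and n1: "\<forall>b\<in>B. norm b = 1"
    and sp: "span B = UNIV" using assms by (auto simp: eigbasis_def)
  have "x \<in> span B" using sp by simp
  then obtain u where u: "x = (\<Sum>b\<in>B. u b *\<^sub>R b)" using span_finite[OF fB] by auto
  have "c \<bullet> x = u c" if c: "c \<in> B" for c
  proof -
    have "c \<bullet> x = (\<Sum>b\<in>B. u b * (c \<bullet> b))" unfolding u by (simp add: inner_sum_right)
    also have "\<dots> = (\<Sum>b\<in>B. if b = c then u b else 0)"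
      using on n1 c by (intro sum.cong refl) (auto simp: norm_eq_1 inner_commute)
    also have "\<dots> = u c" using fB c by simp
    finally show ?thesis .
  qed
  then show ?thesis using u by (metis (no_types, lifting) sum.cong)
qed

lemma spectral:
  fixes A :: "real^'n^'n"
  assumes "symm A"
  shows "\<exists>B. eigbasis A UNIV B"
  using spectral_sub[OF assms, of UNIV] by simp


definition smat :: "(real^'n) set \<Rightarrow> (real^'n \<Rightarrow> real) \<Rightarrow> real^'n^'n" where
  "smat B \<mu> = (\<chi> i j. \<Sum>b\<in>B. \<mu> b * b$i * b$j)"

lemma mv_sum: "A *v (\<Sum>b\<in>B. f b) = (\<Sum>b\<in>B. A *v f b)" for A :: "real^'n^'m"
  by (induct B rule: infinite_finite_induct) (simp_all add: matrix_vector_right_distrib)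

lemma smat_mult: "finite B \<Longrightarrow> smat B \<mu> *v x = (\<Sum>b\<in>B. (\<mu> b * (b \<bullet> x)) *\<^sub>R b)"
  unfolding smat_def
  by (simp add: vec_eq_iff matrix_vector_mult_def inner_vec_def sum_component sum_distrib_left
      sum_distrib_right ac_simps) (subst sum.swap, simp add: ac_simps)

lemma smat_symm: "symm (smat B \<mu>)"
  unfolding symm_def smat_def transpose_def by (simp add: vec_eq_iff ac_simps)

lemma eb_on: "eigbasis A V B \<Longrightarrow> b \<in> B \<Longrightarrow> c \<in> B \<Longrightarrow> b \<bullet> c = (if b = c then 1 else 0)"
  unfolding eigbasis_def by (auto simp: norm_eq_1)

lemma smat_inner:
  assumes eb: "eigbasis A V B" and b: "b \<in> B"
  shows "b \<bullet> (smat B \<mu> *v x) = \<mu> b * (b \<bullet> x)"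
proof -
  have fB: "finite B" using eb by (simp add: eigbasis_def)
  have "b \<bullet> (smat B \<mu> *v x) = (\<Sum>c\<in>B. \<mu> c * (c \<bullet> x) * (b \<bullet> c))"
    by (simp add: smat_mult[OF fB] inner_sum_right)
  also have "\<dots> = (\<Sum>c\<in>B. if c = b then \<mu> c * (c \<bullet> x) else 0)"
    using eb_on[OF eb b] by (intro sum.cong refl) auto
  also have "\<dots> = \<mu> b * (b \<bullet> x)" using fB b by simp
  finally show ?thesis .
qed

lemma smat_comp:
  assumes eb: "eigbasis A V B"
  shows "smat B \<mu> ** smat B \<nu> = smat B (\<lambda>b. \<mu> b * \<nu> b)"
proof -
  have fB: "finite B" using eb by (simp add: eigbasis_def)
  have "smat B \<mu> *v (smat B \<nu> *v x) = smat B (\<lambda>b. \<mu> b * \<nu> b) *v x" for x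
    unfolding smat_mult[OF fB, of \<mu>] smat_mult[OF fB, of "\<lambda>b. \<mu> b * \<nu> b"]
    by (intro sum.cong refl) (simp add: smat_inner[OF eb])
  then show ?thesis by (simp add: matrix_eq matrix_vector_mul_assoc)
qed

lemma smat_one:
  assumes eb: "eigbasis A UNIV B"
  shows "smat B (\<lambda>_. 1) = mat 1"
proof -
  have fB: "finite B" using eb by (simp add: eigbasis_def)
  show ?thesis unfolding matrix_eq using eig_expand[OF eb] by (simp add: smat_mult[OF fB])
qed

lemma smat_eig:
  assumes eb: "eigbasis A UNIV B"
  shows "A = smat B (\<lambda>b. b \<bullet> (A *v b))"
proof -
  have fB: "finite B" using eb by (simp add: eigbasis_def)
  have ev: "A *v b = (b \<bullet> (A *v b)) *\<^sub>R b" if bB: "b \<in> B" for b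
  proof -
    have n: "norm b = 1" using eb bB by (simp add: eigbasis_def)
    obtain l where l: "A *v b = l *\<^sub>R b" using eb bB unfolding eigbasis_def by blast
    then have "b \<bullet> (A *v b) = l" using n by (simp add: norm_eq_1)
    then show ?thesis using l by simp
  qed
  have "A *v x = smat B (\<lambda>b. b \<bullet> (A *v b)) *v x" for x
  proof -
    have "A *v x = A *v (\<Sum>b\<in>B. (b \<bullet> x) *\<^sub>R b)" using eig_expand[OF eb, of x] by simp
    also have "\<dots> = (\<Sum>b\<in>B. (b \<bullet> x) *\<^sub>R (A *v b))" by (simp add: mv_sum matrix_vector_mult_scaleR)
    also have "\<dots> = (\<Sum>b\<in>B. ((b \<bullet> (A *v b)) * (b \<bullet> x)) *\<^sub>R b)"
      by (intro sum.cong refl) (subst ev, auto)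
    finally show ?thesis by (simp add: smat_mult[OF fB])
  qed
  then show ?thesis by (subst matrix_eq) blast
qed

lemma smat_quad:
  assumes eb: "eigbasis A V B"
  shows "x \<bullet> (smat B \<mu> *v x) = (\<Sum>b\<in>B. \<mu> b * (b \<bullet> x)\<^sup>2)"
proof -
  have fB: "finite B" using eb by (simp add: eigbasis_def)
  show ?thesis by (simp add: smat_mult[OF fB] inner_sum_right power2_eq_square inner_commute mult.assoc)
qed

lemma nonzero_coord:
  assumes eb: "eigbasis A UNIV B" and x: "x \<noteq> 0"
  shows "\<exists>b\<in>B. b \<bullet> x \<noteq> 0"
proof (rule ccontr)
  assume "\<not> ?thesis"
  then have z: "\<forall>b\<in>B. b \<bullet> x = 0" by auto
  have "x = (\<Sum>b\<in>B. (b \<bullet> x) *\<^sub>R b)" by (rule eig_expand[OF eb])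
  also have "\<dots> = 0" using z by simp
  finally show False using x by simp
qed

lemma posdef_symm: "posdef A \<Longrightarrow> symm A"
  by (simp add: posdef_def symm_def)

lemma posdef_eig_pos:
  assumes p: "posdef S" and eb: "eigbasis S UNIV B" and b: "b \<in> B"
  shows "b \<bullet> (S *v b) > 0"
proof -
  have "norm b = 1" using eb b by (simp add: eigbasis_def)
  then have "b \<noteq> 0" by auto
  then show ?thesis using p by (simp add: posdef_def)
qed

lemma root_unique:
  fixes R1 R2 :: "real^'n^'n"
  assumes p1: "posdef R1" and p2: "posdef R2" and eq: "R1 ** R1 = R2 ** R2"
  shows "R1 = R2"
proof -
  define D where "D = R1 - R2"
  have sD: "symm D" using p1 p2 unfolding D_def posdef_def symm_def
    by (simp add: transpose_def vec_eq_iff)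
  obtain C where eb: "eigbasis D UNIV C" using spectral[OF sD] by blast
  have z: "c \<bullet> (D *v c) = 0" if c: "c \<in> C" for c
  proof -
    define d where "d = c \<bullet> (D *v c)"
    have nc: "norm c = 1" using eb c by (simp add: eigbasis_def)
    obtain l where l: "D *v c = l *\<^sub>R c" using eb c unfolding eigbasis_def by blast
    then have Dc: "D *v c = d *\<^sub>R c" using nc by (simp add: d_def norm_eq_1)
    have "R1 *v (D *v c) + D *v (R2 *v c) = R1 *v (R1 *v c) - R2 *v (R2 *v c)"
      unfolding D_def by (simp add: matrix_vector_mult_diff_distrib matrix_vector_mult_diff_rdistrib)
    also have "\<dots> = 0" by (simp add: matrix_vector_mul_assoc eq)
    finally have "c \<bullet> (R1 *v (D *v c)) + c \<bullet> (D *v (R2 *v c)) = 0"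
      by (metis inner_right_distrib inner_zero_right)
    moreover have "c \<bullet> (D *v (R2 *v c)) = d * (c \<bullet> (R2 *v c))"
      using symm_inner[OF sD, of c "R2 *v c"] Dc by simp
    moreover have "c \<bullet> (R1 *v (D *v c)) = d * (c \<bullet> (R1 *v c))"
      by (simp add: Dc matrix_vector_mult_scaleR)
    ultimately have "d * (c \<bullet> (R1 *v c) + c \<bullet> (R2 *v c)) = 0" by (simp add: algebra_simps)
    moreover have "c \<noteq> 0" using nc by auto
    then have "c \<bullet> (R1 *v c) + c \<bullet> (R2 *v c) > 0" using p1 p2
      by (simp add: posdef_def add_pos_pos)
    ultimately show ?thesis unfolding d_def by simp
  qed
  have "D = smat C (\<lambda>b. b \<bullet> (D *v b))" by (rule smat_eig[OF eb])
  also have "\<dots> = smat C (\<lambda>_. 0)" unfolding smat_def using z by simp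
  also have "\<dots> = 0" unfolding smat_def by (simp add: vec_eq_iff)
  finally show ?thesis unfolding D_def by simp
qed

lemma inv_sqrt_smat:
  assumes p: "posdef S" and eb: "eigbasis S UNIV B"
  shows "inv_sqrt S = smat B (\<lambda>b. 1 / sqrt (b \<bullet> (S *v b)))"
proof -
  define lam where "lam = (\<lambda>b. b \<bullet> (S *v b))"
  define R where "R = smat B (\<lambda>b. 1 / sqrt (lam b))"
  define Q where "Q = smat B (\<lambda>b. 1 / lam b)"
  have pos: "\<And>b. b \<in> B \<Longrightarrow> lam b > 0" unfolding lam_def using posdef_eig_pos[OF p eb] .
  have Sm: "S = smat B lam" unfolding lam_def by (rule smat_eig[OF eb])
  have RR: "R ** R = Q" unfolding R_def Q_def smat_comp[OF eb]
    unfolding smat_def using pos by (auto simp: vec_eq_iff real_sqrt_mult[symmetric] less_imp_le intro!: sum.cong)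
  have one: "smat B (\<lambda>b. lam b * (1 / lam b)) = mat 1" "smat B (\<lambda>b. (1 / lam b) * lam b) = mat 1"
    unfolding smat_one[OF eb, symmetric] smat_def using pos
    by (auto simp: vec_eq_iff intro!: sum.cong dest: pos)
  have SQ: "S ** Q = mat 1" unfolding Q_def Sm smat_comp[OF eb] by (rule one(1))
  have QS: "Q ** S = mat 1" unfolding Q_def Sm smat_comp[OF eb] by (rule one(2))
  have mi: "matrix_inv S = Q"
  proof -
    have ex: "\<exists>A'. S ** A' = mat 1 \<and> A' ** S = mat 1" using SQ QS by blast
    define A' where "A' = matrix_inv S"
    have A': "S ** A' = mat 1 \<and> A' ** S = mat 1"
      unfolding A'_def matrix_inv_def by (rule someI_ex[OF ex])
    have "A' = A' ** (S ** Q)" using SQ by simp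
    also have "\<dots> = Q" using A' by (simp add: matrix_mul_assoc)
    finally show ?thesis unfolding A'_def .
  qed
  have pR: "posdef R"
  proof -
    have "x \<bullet> (R *v x) > 0" if x0: "x \<noteq> 0" for x
    proof -
      obtain b where b: "b \<in> B" "b \<bullet> x \<noteq> 0" using nonzero_coord[OF eb x0] by blast
      have fB: "finite B" using eb by (simp add: eigbasis_def)
      have "x \<bullet> (R *v x) = (\<Sum>c\<in>B. 1 / sqrt (lam c) * (c \<bullet> x)\<^sup>2)"
        unfolding R_def by (rule smat_quad[OF eb])
      also have "\<dots> > 0"
      proof (rule sum_pos2[OF fB b(1)])
        show "0 < 1 / sqrt (lam b) * (b \<bullet> x)\<^sup>2" using pos[OF b(1)] b(2) by simp
        show "\<And>i. i \<in> B \<Longrightarrow> 0 \<le> 1 / sqrt (lam i) * (i \<bullet> x)\<^sup>2" using pos by (simp add: less_imp_le)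
      qed
      finally show ?thesis .
    qed
    then show ?thesis using smat_symm unfolding posdef_def symm_def R_def by blast
  qed
  have "inv_sqrt S = R"
    unfolding inv_sqrt_def
  proof (rule the_equality)
    show "posdef R \<and> R ** R = matrix_inv S" using pR RR mi by simp
    show "\<And>R'. posdef R' \<and> R' ** R' = matrix_inv S \<Longrightarrow> R' = R"
      using pR RR mi root_unique by metis
  qed
  then show ?thesis unfolding R_def lam_def .
qed

lemma inv_sqrt_props:
  fixes S :: "real^'n^'n"
  assumes p: "posdef S"
  shows "symm (inv_sqrt S)" and "inv_sqrt S *v (S *v (inv_sqrt S *v x)) = x"
proof -
  obtain B where eb: "eigbasis S UNIV B" using spectral[OF posdef_symm[OF p]] by blast
  define lam where "lam = (\<lambda>b. b \<bullet> (S *v b))"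
  have pos: "\<And>b. b \<in> B \<Longrightarrow> lam b > 0" unfolding lam_def using posdef_eig_pos[OF p eb] .
  have Sm: "S = smat B lam" unfolding lam_def by (rule smat_eig[OF eb])
  have R: "inv_sqrt S = smat B (\<lambda>b. 1 / sqrt (lam b))" unfolding lam_def by (rule inv_sqrt_smat[OF p eb])
  show "symm (inv_sqrt S)" unfolding R by (rule smat_symm)
  have one: "smat B (\<lambda>b. 1 / sqrt (lam b) * (lam b * (1 / sqrt (lam b)))) = mat 1"
    unfolding smat_one[OF eb, symmetric] smat_def using pos
    by (auto simp: vec_eq_iff less_imp_le intro!: sum.cong dest: pos)
  have "inv_sqrt S ** (S ** inv_sqrt S) = mat 1"
    unfolding R by (simp only: Sm smat_comp[OF eb] one)
  then show "inv_sqrt S *v (S *v (inv_sqrt S *v x)) = x"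
    by (simp add: matrix_vector_mul_assoc)
qed


lemma norm_sq_basis_c:
  fixes t :: "'a::euclidean_space"
  shows "(norm t)\<^sup>2 = (\<Sum>b\<in>Basis. (t \<bullet> b)\<^sup>2)"
  unfolding power2_norm_eq_inner by (subst euclidean_inner) (simp add: power2_eq_square)

lemma outer_mult: "outer v w *v u = (w \<bullet> u) *\<^sub>R v"
  unfolding outer_def by (simp add: vec_eq_iff matrix_vector_mult_def inner_vec_def sum_distrib_left ac_simps)

lemma sum_mv: "(\<Sum>j\<in>J. M j) *v u = (\<Sum>j\<in>J. M j *v u)" for M :: "nat \<Rightarrow> real^'n^'m"
  by (induct J rule: infinite_finite_induct) (simp_all add: matrix_vector_mult_add_rdistrib)

lemma scaleR_mv: "(c *\<^sub>R M) *v u = c *\<^sub>R (M *v u)" for M :: "real^'n^'m"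
  by (simp add: vec_eq_iff matrix_vector_mult_def sum_distrib_left ac_simps)

context
  fixes n :: nat and X :: "nat \<Rightarrow> real^'d"
  assumes pd: "posdef (sample_cov n X)" and nge: "n \<ge> CARD('d) + 1"
begin

abbreviation "Y \<equiv> scaled_res n X"
abbreviation "R \<equiv> inv_sqrt (sample_cov n X)"
abbreviation "mu \<equiv> sample_mean n X"

lemma npos: "n > 0" using nge by simp

lemma dev_sum: "(\<Sum>j=1..n. X j - mu) = 0"
proof -
  have c: "(\<Sum>j=1..n. mu) = real n *\<^sub>R mu" by (subst sum_constant_scaleR) simp
  have "(\<Sum>j=1..n. X j - mu) = (\<Sum>j=1..n. X j) - real n *\<^sub>R mu" by (simp only: sum_subtractf c)
  also have "\<dots> = 0" unfolding sample_mean_def using npos by simp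
  finally show ?thesis .
qed

lemma Y_sum: "(\<Sum>j=1..n. Y j) = 0"
  unfolding scaled_res_def mv_sum[symmetric] dev_sum by simp

lemma S_apply: "sample_cov n X *v u = (1 / real n) *\<^sub>R (\<Sum>j=1..n. ((X j - mu) \<bullet> u) *\<^sub>R (X j - mu))"
  unfolding sample_cov_def scaleR_mv sum_mv outer_mult by simp

lemma Y_sum2: "(\<Sum>j=1..n. (Y j \<bullet> v) *\<^sub>R Y j) = real n *\<^sub>R v"
proof -
  have sR: "symm R" using inv_sqrt_props(1)[OF pd] .
  have "(\<Sum>j=1..n. (Y j \<bullet> v) *\<^sub>R Y j) = (\<Sum>j=1..n. R *v (((X j - mu) \<bullet> (R *v v)) *\<^sub>R (X j - mu)))"
    unfolding scaled_res_def
    by (intro sum.cong refl) (simp add: matrix_vector_mult_scaleR symm_inner[OF sR] inner_commute)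
  also have "\<dots> = R *v (real n *\<^sub>R (sample_cov n X *v (R *v v)))"
    unfolding mv_sum[symmetric] S_apply using npos by simp
  also have "\<dots> = real n *\<^sub>R v"
    by (simp add: matrix_vector_mult_scaleR inv_sqrt_props(2)[OF pd])
  finally show ?thesis .
qed

lemma F1: "(\<Sum>j=1..n. Y j \<bullet> w) = 0"
  using Y_sum by (metis inner_sum_left inner_zero_left)

lemma F2: "(\<Sum>j=1..n. (Y j \<bullet> v) * (Y j \<bullet> w)) = real n * (v \<bullet> w)"
proof -
  have "(\<Sum>j=1..n. (Y j \<bullet> v) * (Y j \<bullet> w)) = (\<Sum>j=1..n. (Y j \<bullet> v) *\<^sub>R Y j) \<bullet> w"
    by (simp add: inner_sum_left)
  then show ?thesis by (simp only: Y_sum2 inner_scaleR_left)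
qed

lemma F3: "(\<Sum>j=1..n. (norm (Y j))\<^sup>2) = real n * real CARD('d)"
proof -
  have "(\<Sum>j=1..n. (norm (Y j))\<^sup>2) = (\<Sum>j=1..n. \<Sum>b\<in>Basis. (Y j \<bullet> b) * (Y j \<bullet> b))"
    by (intro sum.cong refl) (subst norm_sq_basis_c, simp add: power2_eq_square)
  also have "\<dots> = (\<Sum>b\<in>(Basis::(real^'d) set). real n * (b \<bullet> b))"
    by (subst sum.swap) (simp only: F2)
  also have "\<dots> = real n * real CARD('d)" by simp
  finally show ?thesis .
qed

end


lemma exp_inner_deriv:
  "((\<lambda>t. exp (t \<bullet> y)) has_derivative (\<lambda>h. (h \<bullet> y) * exp (t \<bullet> y))) (at t)"
proof -
  have "((\<lambda>t. t \<bullet> y) has_derivative (\<lambda>h. h \<bullet> y)) (at t)"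
    by (rule bounded_linear_imp_has_derivative) (rule bounded_linear_inner_left)
  from DERIV_compose_FDERIV[OF DERIV_exp this] show ?thesis .
qed

lemma grad_emp:
  fixes X :: "nat \<Rightarrow> real^'d"
  shows "grad (emp_mgf n X) t = (1 / real n) *\<^sub>R (\<Sum>j=1..n. exp (t \<bullet> scaled_res n X j) *\<^sub>R scaled_res n X j)"
proof -
  define g where "g = (1 / real n) *\<^sub>R (\<Sum>j=1..n. exp (t \<bullet> scaled_res n X j) *\<^sub>R scaled_res n X j)"
  have d1: "((\<lambda>t. \<Sum>j=1..n. exp (t \<bullet> scaled_res n X j)) has_derivative
      (\<lambda>h. \<Sum>j=1..n. (h \<bullet> scaled_res n X j) * exp (t \<bullet> scaled_res n X j))) (at t)"
    by (rule has_derivative_sum) (rule exp_inner_deriv)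
  have d2: "(emp_mgf n X has_derivative
      (\<lambda>h. (1 / real n) * (\<Sum>j=1..n. (h \<bullet> scaled_res n X j) * exp (t \<bullet> scaled_res n X j)))) (at t)"
    unfolding emp_mgf_def[abs_def] by (rule has_derivative_mult_right[OF d1])
  have eq: "(\<lambda>h. (1 / real n) * (\<Sum>j=1..n. (h \<bullet> scaled_res n X j) * exp (t \<bullet> scaled_res n X j))) = (\<lambda>h. g \<bullet> h)"
  proof (rule ext)
    fix h
    have "(\<Sum>j=1..n. (h \<bullet> scaled_res n X j) * exp (t \<bullet> scaled_res n X j)) = (\<Sum>j=1..n. exp (t \<bullet> scaled_res n X j) * (scaled_res n X j \<bullet> h))"
      by (intro sum.cong refl) (simp add: inner_commute)
    then show "(1 / real n) * (\<Sum>j=1..n. (h \<bullet> scaled_res n X j) * exp (t \<bullet> scaled_res n X j)) = g \<bullet> h"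
      unfolding g_def inner_scaleR_left inner_sum_left by simp
  qed
  have D: "(emp_mgf n X has_derivative (\<lambda>h. g \<bullet> h)) (at t)" using d2 unfolding eq .
  show ?thesis unfolding grad_def g_def[symmetric]
  proof (rule the_equality)
    show "(emp_mgf n X has_derivative (\<lambda>h. g \<bullet> h)) (at t)" by (rule D)
  next
    fix g' assume "(emp_mgf n X has_derivative (\<lambda>h. g' \<bullet> h)) (at t)"
    from has_derivative_unique[OF D this] have "\<And>h. g \<bullet> h = g' \<bullet> h" by metis
    then have "(g' - g) \<bullet> (g' - g) = 0" by (simp add: inner_diff_left inner_diff_right)
    then show "g' = g" by simp
  qed
qed

lemma integrand_eq:
  fixes y :: "nat \<Rightarrow> 'a::real_inner" and t :: 'a
  shows "(norm ((1 / real n) *\<^sub>R (\<Sum>j\<in>J. exp (t \<bullet> y j) *\<^sub>R (y j - t))))\<^sup>2 * exp (- \<gamma> * (norm t)\<^sup>2) =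
    (1 / (real n)\<^sup>2) * (\<Sum>j\<in>J. \<Sum>k\<in>J. ((y j \<bullet> y k) - t \<bullet> (y j + y k) + (norm t)\<^sup>2) * exp (t \<bullet> (y j + y k) - \<gamma> * (norm t)\<^sup>2))"
proof -
  have e: "exp (t \<bullet> y j) * exp (t \<bullet> y k) * exp (- \<gamma> * (norm t)\<^sup>2) = exp (t \<bullet> (y j + y k) - \<gamma> * (norm t)\<^sup>2)" for j k
    by (simp add: exp_add[symmetric] inner_add_right)
  have i: "(y k - t) \<bullet> (y j - t) = (y j \<bullet> y k) - t \<bullet> (y j + y k) + (norm t)\<^sup>2" for j k
    by (simp add: inner_diff_left inner_diff_right inner_add_right power2_norm_eq_inner inner_commute algebra_simps)
  have "(norm ((1 / real n) *\<^sub>R (\<Sum>j\<in>J. exp (t \<bullet> y j) *\<^sub>R (y j - t))))\<^sup>2 =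
     (1 / (real n)\<^sup>2) * (\<Sum>j\<in>J. \<Sum>k\<in>J. exp (t \<bullet> y j) * exp (t \<bullet> y k) * ((y k - t) \<bullet> (y j - t)))"
    unfolding power2_norm_eq_inner
    by (simp add: inner_sum_left inner_sum_right sum_distrib_left power2_eq_square ac_simps)
  moreover have "(\<Sum>j\<in>J. \<Sum>k\<in>J. exp (t \<bullet> y j) * exp (t \<bullet> y k) * ((y k - t) \<bullet> (y j - t))) * exp (- \<gamma> * (norm t)\<^sup>2)
      = (\<Sum>j\<in>J. \<Sum>k\<in>J. ((y j \<bullet> y k) - t \<bullet> (y j + y k) + (norm t)\<^sup>2) * exp (t \<bullet> (y j + y k) - \<gamma> * (norm t)\<^sup>2))"
    unfolding sum_distrib_right
    by (intro sum.cong refl) (simp only: i e[symmetric] ac_simps)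
  ultimately show ?thesis by (simp only: mult.assoc)
qed

lemma term_integral:
  fixes a :: "'a::euclidean_space"
  assumes g: "\<gamma> > 0"
  shows "has_bochner_integral lborel (\<lambda>t. (p - t \<bullet> a + (norm t)\<^sup>2) * exp (t \<bullet> a - \<gamma> * (norm t)\<^sup>2))
     (GZ \<gamma> a * (p - (norm a)\<^sup>2 / (2*\<gamma>) + (norm a)\<^sup>2 / (4*\<gamma>\<^sup>2) + real DIM('a) / (2*\<gamma>)))"
proof -
  have "has_bochner_integral lborel (\<lambda>t. p * exp (t \<bullet> a - \<gamma> * (norm t)\<^sup>2) - (t \<bullet> a) * exp (t \<bullet> a - \<gamma> * (norm t)\<^sup>2)
      + (norm t)\<^sup>2 * exp (t \<bullet> a - \<gamma> * (norm t)\<^sup>2))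
     (p * GZ \<gamma> a - (a \<bullet> a) / (2*\<gamma>) * GZ \<gamma> a + ((norm a)\<^sup>2 / (4*\<gamma>\<^sup>2) + real DIM('a)/(2*\<gamma>)) * GZ \<gamma> a)"
    by (intro has_bochner_integral_add has_bochner_integral_diff has_bochner_integral_mult_right
        gaussd_0[OF g] gaussd_lin[OF g] gaussd_sq[OF g])
  moreover have "(\<lambda>t. p * exp (t \<bullet> a - \<gamma> * (norm t)\<^sup>2) - (t \<bullet> a) * exp (t \<bullet> a - \<gamma> * (norm t)\<^sup>2)
      + (norm t)\<^sup>2 * exp (t \<bullet> a - \<gamma> * (norm t)\<^sup>2)) = (\<lambda>t. (p - t \<bullet> a + (norm t)\<^sup>2) * exp (t \<bullet> a - \<gamma> * (norm t)\<^sup>2))"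
    by (simp add: fun_eq_iff algebra_simps)
  moreover have "p * GZ \<gamma> a - (a \<bullet> a) / (2*\<gamma>) * GZ \<gamma> a + ((norm a)\<^sup>2 / (4*\<gamma>\<^sup>2) + real DIM('a)/(2*\<gamma>)) * GZ \<gamma> a
     = GZ \<gamma> a * (p - (norm a)\<^sup>2 / (2*\<gamma>) + (norm a)\<^sup>2 / (4*\<gamma>\<^sup>2) + real DIM('a) / (2*\<gamma>))"
    by (simp add: power2_norm_eq_inner algebra_simps)
  ultimately show ?thesis by simp
qed


context
  fixes n :: nat and X :: "nat \<Rightarrow> real^'d"
  assumes pd: "posdef (sample_cov n X)" and nge: "n \<ge> CARD('d) + 1"
begin

abbreviation "YY \<equiv> scaled_res n X"
abbreviation "P j k \<equiv> YY j \<bullet> YY k"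
abbreviation "x j \<equiv> (norm (YY j))\<^sup>2"
abbreviation "II \<equiv> {1..n}"

lemma B1: "(\<Sum>k\<in>II. P j k) = 0"
proof -
  have "(\<Sum>k\<in>II. P j k) = (\<Sum>k\<in>II. YY k \<bullet> YY j)" by (simp only: inner_commute)
  then show ?thesis using F1[OF pd nge, of "YY j"] by simp
qed

lemma B1': "(\<Sum>k\<in>II. P k j) = 0"
  using F1[OF pd nge, of "YY j"] by simp

lemma B2: "(\<Sum>k\<in>II. (P j k)\<^sup>2) = real n * x j"
proof -
  have "(\<Sum>k\<in>II. (P j k)\<^sup>2) = (\<Sum>k\<in>II. (YY k \<bullet> YY j) * (YY k \<bullet> YY j))"
    by (simp only: inner_commute power2_eq_square)
  also have "\<dots> = real n * (YY j \<bullet> YY j)" by (rule F2[OF pd nge])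
  finally show ?thesis by (simp add: power2_norm_eq_inner)
qed

lemma B2': "(\<Sum>k\<in>II. (P k j)\<^sup>2) = real n * x j"
proof -
  have "(\<Sum>k\<in>II. (P k j)\<^sup>2) = (\<Sum>k\<in>II. (YY k \<bullet> YY j) * (YY k \<bullet> YY j))"
    by (simp only: power2_eq_square)
  also have "\<dots> = real n * (YY j \<bullet> YY j)" by (rule F2[OF pd nge])
  finally show ?thesis by (simp add: power2_norm_eq_inner)
qed

lemma B3: "(\<Sum>j\<in>II. x j) = real n * real CARD('d)"
  by (rule F3[OF pd nge])

definition "QQ = (\<Sum>j\<in>II. (x j)\<^sup>2)"

lemma D1: "(\<Sum>j\<in>II. \<Sum>k\<in>II. P j k) = 0"
  by (simp only: B1 sum.neutral_const)

lemma D2: "(\<Sum>j\<in>II. \<Sum>k\<in>II. P j k * x j) = 0"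
  by (simp only: sum_distrib_right[symmetric] B1 mult_zero_left sum.neutral_const)

lemma D2': "(\<Sum>j\<in>II. \<Sum>k\<in>II. P j k * x k) = 0"
  by (subst sum.swap) (simp only: sum_distrib_right[symmetric] B1' mult_zero_left sum.neutral_const)

lemma D3: "(\<Sum>j\<in>II. \<Sum>k\<in>II. (P j k)\<^sup>2) = real n * (real n * real CARD('d))"
  by (simp only: B2 sum_distrib_left[symmetric] B3)

lemma D4: "(\<Sum>j\<in>II. \<Sum>k\<in>II. x j) = real n * (real n * real CARD('d))"
proof -
  have "(\<Sum>j\<in>II. \<Sum>k\<in>II. x j) = (\<Sum>j\<in>II. real n * x j)" by simp
  then show ?thesis by (simp only: sum_distrib_left[symmetric] B3)
qed

lemma D4': "(\<Sum>j\<in>II. \<Sum>k\<in>II. x k) = real n * (real n * real CARD('d))"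
proof -
  have "(\<Sum>j\<in>II. \<Sum>k\<in>II. x k) = (\<Sum>j\<in>II. real n * real CARD('d))" by (simp only: B3)
  then show ?thesis by simp
qed

lemma D5: "(\<Sum>j\<in>II. \<Sum>k\<in>II. P j k * (x j)\<^sup>2) = 0"
  by (simp only: sum_distrib_right[symmetric] B1 mult_zero_left sum.neutral_const)

lemma D5': "(\<Sum>j\<in>II. \<Sum>k\<in>II. P j k * (x k)\<^sup>2) = 0"
  by (subst sum.swap) (simp only: sum_distrib_right[symmetric] B1' mult_zero_left sum.neutral_const)

lemma D6: "(\<Sum>j\<in>II. \<Sum>k\<in>II. (P j k)\<^sup>2 * x j) = real n * QQ"
proof -
  have "(\<Sum>j\<in>II. \<Sum>k\<in>II. (P j k)\<^sup>2 * x j) = (\<Sum>j\<in>II. real n * (x j)\<^sup>2)"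
    by (simp only: sum_distrib_right[symmetric] B2) (simp only: power2_eq_square mult.assoc)
  then show ?thesis unfolding QQ_def by (simp only: sum_distrib_left[symmetric])
qed

lemma D6': "(\<Sum>j\<in>II. \<Sum>k\<in>II. (P j k)\<^sup>2 * x k) = real n * QQ"
proof -
  have "(\<Sum>j\<in>II. \<Sum>k\<in>II. (P j k)\<^sup>2 * x k) = (\<Sum>k\<in>II. \<Sum>j\<in>II. (P j k)\<^sup>2 * x k)" by (rule sum.swap)
  also have "\<dots> = (\<Sum>k\<in>II. real n * (x k)\<^sup>2)"
    by (simp only: sum_distrib_right[symmetric] B2') (simp only: power2_eq_square mult.assoc)
  finally show ?thesis unfolding QQ_def by (simp only: sum_distrib_left[symmetric])
qed

lemma D7: "(\<Sum>j\<in>II. \<Sum>k\<in>II. x j * x k) = (real n * real CARD('d)) * (real n * real CARD('d))"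
  by (simp only: sum_distrib_left[symmetric] sum_distrib_right[symmetric] B3)

lemma D7b: "(\<Sum>j\<in>II. x j * (\<Sum>k\<in>II. x k)) = (real n * real CARD('d)) * (real n * real CARD('d))"
  by (simp only: sum_distrib_right[symmetric] B3)

lemma D8: "(\<Sum>j\<in>II. \<Sum>k\<in>II. (x j)\<^sup>2) = real n * QQ"
  unfolding QQ_def by (simp add: sum_distrib_left)

lemma D8': "(\<Sum>j\<in>II. \<Sum>k\<in>II. (x k)\<^sup>2) = real n * QQ"
  unfolding QQ_def by simp

lemma c_expand: "(norm (YY j + YY k))\<^sup>2 = x j + x k + 2 * P j k"
  by (simp add: power2_norm_eq_inner inner_add_left inner_add_right inner_commute)

lemma AL1: "(\<Sum>j\<in>II. \<Sum>k\<in>II. P j k) = 0" by (rule D1)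

lemma AL2: "(\<Sum>j\<in>II. \<Sum>k\<in>II. P j k * (norm (YY j + YY k))\<^sup>2 + (2 * real CARD('d) - 2 * (norm (YY j + YY k))\<^sup>2)) = 0"
proof -
  have pt: "P j k * (norm (YY j + YY k))\<^sup>2 + (2 * real CARD('d) - 2 * (norm (YY j + YY k))\<^sup>2) =
     P j k * x j + P j k * x k + 2 * (P j k)\<^sup>2 + 2 * real CARD('d) - 2 * x j - 2 * x k - 4 * P j k" for j k
    unfolding c_expand by (simp add: algebra_simps power2_eq_square)
  have "(\<Sum>j\<in>II. \<Sum>k\<in>II. P j k * (norm (YY j + YY k))\<^sup>2 + (2 * real CARD('d) - 2 * (norm (YY j + YY k))\<^sup>2)) =
     (\<Sum>j\<in>II. \<Sum>k\<in>II. P j k * x j + P j k * x k + 2 * (P j k)\<^sup>2 + 2 * real CARD('d) - 2 * x j - 2 * x k - 4 * P j k)"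
    by (simp only: pt)
  also have "\<dots> = 0 + 0 + 2 * (real n * (real n * real CARD('d))) + (\<Sum>j\<in>II. \<Sum>k\<in>II. 2 * real CARD('d)) - 2 * (real n * (real n * real CARD('d)))
      - 2 * (real n * (real n * real CARD('d))) - 4 * 0"
    by (simp only: sum.distrib sum_subtractf sum_distrib_left[symmetric] D1 D2 D2' D3 D4 D4')
  also have "\<dots> = 0" by simp
  finally show ?thesis .
qed

lemma AL3: "(\<Sum>j\<in>II. \<Sum>k\<in>II. P j k * ((norm (YY j + YY k))\<^sup>2)\<^sup>2 / 2 + (2 * real CARD('d) - 2 * (norm (YY j + YY k))\<^sup>2) * (norm (YY j + YY k))\<^sup>2
      + 4 * (norm (YY j + YY k))\<^sup>2) = (real n)\<^sup>2 * (2 * b1 n X + b1_tilde n X)"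
proof -
  have pt: "P j k * ((norm (YY j + YY k))\<^sup>2)\<^sup>2 / 2 + (2 * real CARD('d) - 2 * (norm (YY j + YY k))\<^sup>2) * (norm (YY j + YY k))\<^sup>2
      + 4 * (norm (YY j + YY k))\<^sup>2 =
     (1/2) * (P j k * (x j)\<^sup>2) + (1/2) * (P j k * (x k)\<^sup>2) + 2 * (P j k ^ 3) + P j k * x j * x k
     + 2 * ((P j k)\<^sup>2 * x j) + 2 * ((P j k)\<^sup>2 * x k) + (2 * real CARD('d) + 4) * x j + (2 * real CARD('d) + 4) * x k
     + (4 * real CARD('d) + 8) * P j k - 2 * (x j)\<^sup>2 - 2 * (x k)\<^sup>2 - 8 * (P j k)\<^sup>2 - 4 * (x j * x k)
     - 8 * (P j k * x j) - 8 * (P j k * x k)" for j k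
    unfolding c_expand by (simp add: algebra_simps power2_eq_square power3_eq_cube)
  have "(\<Sum>j\<in>II. \<Sum>k\<in>II. P j k * ((norm (YY j + YY k))\<^sup>2)\<^sup>2 / 2 + (2 * real CARD('d) - 2 * (norm (YY j + YY k))\<^sup>2) * (norm (YY j + YY k))\<^sup>2
      + 4 * (norm (YY j + YY k))\<^sup>2) =
     (\<Sum>j\<in>II. \<Sum>k\<in>II. (1/2) * (P j k * (x j)\<^sup>2) + (1/2) * (P j k * (x k)\<^sup>2) + 2 * (P j k ^ 3) + P j k * x j * x k
     + 2 * ((P j k)\<^sup>2 * x j) + 2 * ((P j k)\<^sup>2 * x k) + (2 * real CARD('d) + 4) * x j + (2 * real CARD('d) + 4) * x k
     + (4 * real CARD('d) + 8) * P j k - 2 * (x j)\<^sup>2 - 2 * (x k)\<^sup>2 - 8 * (P j k)\<^sup>2 - 4 * (x j * x k)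
     - 8 * (P j k * x j) - 8 * (P j k * x k))"
    by (simp only: pt)
  also have "\<dots> = (1/2) * 0 + (1/2) * 0 + 2 * (\<Sum>j\<in>II. \<Sum>k\<in>II. P j k ^ 3) + (\<Sum>j\<in>II. \<Sum>k\<in>II. P j k * x j * x k)
     + 2 * (real n * QQ) + 2 * (real n * QQ) + (2 * real CARD('d) + 4) * (real n * (real n * real CARD('d))) + (2 * real CARD('d) + 4) * (real n * (real n * real CARD('d)))
     + (4 * real CARD('d) + 8) * 0 - 2 * (real n * QQ) - 2 * (real n * QQ) - 8 * (real n * (real n * real CARD('d))) - 4 * ((real n * real CARD('d)) * (real n * real CARD('d)))
     - 8 * 0 - 8 * 0"
    by (simp only: sum.distrib sum_subtractf sum_distrib_left[symmetric] D1 D2 D2' D3 D4 D4' D5 D5' D6 D6' D7 D7b D8 D8')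
  also have "\<dots> = 2 * (\<Sum>j\<in>II. \<Sum>k\<in>II. P j k ^ 3) + (\<Sum>j\<in>II. \<Sum>k\<in>II. P j k * x j * x k)"
    by (simp add: algebra_simps)
  also have "\<dots> = (real n)\<^sup>2 * (2 * b1 n X + b1_tilde n X)"
    unfolding b1_def b1_tilde_def using npos[OF pd nge] by (simp add: field_simps)
  finally show ?thesis .
qed

end


lemma term_lim:
  fixes p B C c :: real
  assumes c: "c \<ge> 0"
  shows "((\<lambda>g. 16 * g\<^sup>2 * (exp (c / (4*g)) * (p + B / (4*g) + C / (16 * g\<^sup>2)) - p - (p*c + B) / (4*g)))
     \<longlongrightarrow> p*c\<^sup>2/2 + B*c + C) at_top"
proof (cases "c = 0")
  case True
  have ev: "eventually (\<lambda>g. C = 16 * g\<^sup>2 * (exp (c / (4*g)) * (p + B / (4*g) + C / (16 * g\<^sup>2)) - p - (p*c + B) / (4*g))) at_top"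
    using eventually_gt_at_top[of 0]
    by eventually_elim (simp add: True field_simps power2_eq_square)
  have "((\<lambda>g. C) \<longlongrightarrow> p*c\<^sup>2/2 + B*c + C) at_top" using True by simp
  with tendsto_cong[OF ev] show ?thesis by (rule iffD1)
next
  case False
  then have cp: "c > 0" using c by simp
  have "((\<lambda>g. 16 * g\<^sup>2 * (exp (c / (4*g)) * (p + B / (4*g) + C / (16 * g\<^sup>2)) - p - (p*c + B) / (4*g)))
     \<longlongrightarrow> C + (c * B + c * (c * p) / 2)) at_top"
    using cp by real_asymp
  moreover have "C + (c * B + c * (c * p) / 2) = p*c\<^sup>2/2 + B*c + C" by (simp add: power2_eq_square algebra_simps)
  ultimately show ?thesis by simp
qed


lemma powr_K:
  fixes \<gamma> :: real and N :: nat
  assumes g: "\<gamma> > 0"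
  shows "\<gamma> powr (2 + real N / 2) * sqrt (pi / \<gamma>) ^ N = \<gamma>\<^sup>2 * pi powr (real N / 2)"
proof -
  have "sqrt (pi / \<gamma>) ^ N = ((pi / \<gamma>) powr (1/2)) ^ N" using g by (simp add: powr_half_sqrt)
  also have "\<dots> = (pi / \<gamma>) powr (real N * (1/2))" using g by (simp add: powr_power)
  also have "\<dots> = pi powr (real N / 2) / \<gamma> powr (real N / 2)" using g by (simp add: powr_divide)
  finally have K: "sqrt (pi / \<gamma>) ^ N = pi powr (real N / 2) / \<gamma> powr (real N / 2)" .
  have "\<gamma> powr (2 + real N / 2) = \<gamma>\<^sup>2 * \<gamma> powr (real N / 2)" using g by (simp add: powr_add)
  then show ?thesis unfolding K using g by simp
qed

context
  fixes n :: nat and X :: "nat \<Rightarrow> real^'d"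
  assumes pd: "posdef (sample_cov n X)" and nge: "n \<ge> CARD('d) + 1"
begin

abbreviation "Yv \<equiv> scaled_res n X"

lemma diff_eq: "grad (emp_mgf n X) t - emp_mgf n X t *\<^sub>R t = (1/real n) *\<^sub>R (\<Sum>j=1..n. exp (t \<bullet> Yv j) *\<^sub>R (Yv j - t))"
  unfolding grad_emp emp_mgf_def by (simp add: scaleR_diff_right sum_subtractf scaleR_sum_left[symmetric])

definition "cc j k = (norm (Yv j + Yv k))\<^sup>2"

lemma ts_eq:
  assumes g: "\<gamma> > 0"
  shows "test_stat n X \<gamma> = real n * ((1 / (real n)\<^sup>2) * (\<Sum>j\<in>{1..n}. \<Sum>k\<in>{1..n}.
     GZ \<gamma> (Yv j + Yv k) * (Yv j \<bullet> Yv k - cc j k / (2*\<gamma>) + cc j k / (4*\<gamma>\<^sup>2) + real CARD('d) / (2*\<gamma>))))"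
proof -
  define F where "F = (\<lambda>t::real^'d. (1 / (real n)\<^sup>2) * (\<Sum>j\<in>{1..n}. \<Sum>k\<in>{1..n}.
     ((Yv j \<bullet> Yv k) - t \<bullet> (Yv j + Yv k) + (norm t)\<^sup>2) * exp (t \<bullet> (Yv j + Yv k) - \<gamma> * (norm t)\<^sup>2)))"
  have feq: "(\<lambda>t::real^'d. (norm (grad (emp_mgf n X) t - emp_mgf n X t *\<^sub>R t))\<^sup>2 * exp (- \<gamma> * (norm t)\<^sup>2)) = F"
    unfolding F_def diff_eq by (rule ext) (rule integrand_eq)
  have hb: "has_bochner_integral lborel F ((1 / (real n)\<^sup>2) * (\<Sum>j\<in>{1..n}. \<Sum>k\<in>{1..n}.
     GZ \<gamma> (Yv j + Yv k) * (Yv j \<bullet> Yv k - cc j k / (2*\<gamma>) + cc j k / (4*\<gamma>\<^sup>2) + real CARD('d) / (2*\<gamma>))))"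
    unfolding F_def cc_def
    using term_integral[OF g, where 'a="real^'d"] 
    by (intro has_bochner_integral_mult_right has_bochner_integral_sum) simp
  have "integral UNIV F = integral\<^sup>L lborel F"
    using hb by (intro integral_lborel) (rule integrable.intros)
  also have "\<dots> = (1 / (real n)\<^sup>2) * (\<Sum>j\<in>{1..n}. \<Sum>k\<in>{1..n}.
     GZ \<gamma> (Yv j + Yv k) * (Yv j \<bullet> Yv k - cc j k / (2*\<gamma>) + cc j k / (4*\<gamma>\<^sup>2) + real CARD('d) / (2*\<gamma>)))"
    using hb by (rule has_bochner_integral_integral_eq)
  finally show ?thesis unfolding test_stat_def feq by simp
qed

definition "gt \<gamma> j k = 16 * \<gamma>\<^sup>2 * (exp (cc j k / (4*\<gamma>)) * (Yv j \<bullet> Yv k + (2 * real CARD('d) - 2 * cc j k) / (4*\<gamma>) + (4 * cc j k) / (16 * \<gamma>\<^sup>2)))"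

lemma expr_eq:
  assumes g: "\<gamma> > 0"
  shows "\<gamma> powr (2 + real CARD('d) / 2) * (16 * test_stat n X \<gamma>) / (real n * pi powr (real CARD('d) / 2))
     = (1 / (real n)\<^sup>2) * (\<Sum>j\<in>{1..n}. \<Sum>k\<in>{1..n}. gt \<gamma> j k)"
proof -
  define K where "K = sqrt (pi / \<gamma>) ^ CARD('d)"
  define E where "E = (\<lambda>j k. exp (cc j k / (4*\<gamma>)))"
  define Pb where "Pb = (\<lambda>j k. Yv j \<bullet> Yv k - cc j k / (2*\<gamma>) + cc j k / (4*\<gamma>\<^sup>2) + real CARD('d) / (2*\<gamma>))"
  have GZ: "GZ \<gamma> (Yv j + Yv k) = K * E j k" for j k
    unfolding K_def E_def cc_def GZ_eq by simp
  have gt: "gt \<gamma> j k = 16 * \<gamma>\<^sup>2 * (E j k * Pb j k)" for j k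
    unfolding gt_def E_def Pb_def using g by (simp add: field_simps power2_eq_square)
  have npos: "real n > 0" using nge by simp
  have pK: "\<gamma> powr (2 + real CARD('d) / 2) * K = \<gamma>\<^sup>2 * pi powr (real CARD('d) / 2)"
    unfolding K_def by (rule powr_K[OF g])
  have pp: "pi powr (real CARD('d) / 2) > 0" by simp
  have "\<gamma> powr (2 + real CARD('d) / 2) * (16 * test_stat n X \<gamma>) / (real n * pi powr (real CARD('d) / 2))
     = \<gamma> powr (2 + real CARD('d) / 2) * (16 * (real n * ((1 / (real n)\<^sup>2) * (K * (\<Sum>j\<in>{1..n}. \<Sum>k\<in>{1..n}. E j k * Pb j k)))))
       / (real n * pi powr (real CARD('d) / 2))"
  proof -
    have ts: "test_stat n X \<gamma> = real n * ((1 / (real n)\<^sup>2) * (\<Sum>j\<in>{1..n}. \<Sum>k\<in>{1..n}. GZ \<gamma> (Yv j + Yv k) * Pb j k))"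
      unfolding Pb_def by (rule ts_eq[OF g])
    have S: "(\<Sum>j\<in>{1..n}. \<Sum>k\<in>{1..n}. GZ \<gamma> (Yv j + Yv k) * Pb j k) = K * (\<Sum>j\<in>{1..n}. \<Sum>k\<in>{1..n}. E j k * Pb j k)"
      by (simp only: GZ sum_distrib_left mult.assoc)
    show ?thesis by (simp only: ts S)
  qed
  also have "\<dots> = (\<gamma> powr (2 + real CARD('d) / 2) * K) * 16 * (\<Sum>j\<in>{1..n}. \<Sum>k\<in>{1..n}. E j k * Pb j k) / ((real n)\<^sup>2 * pi powr (real CARD('d) / 2))"
    using npos by (simp add: field_simps power2_eq_square)
  also have "\<dots> = (1 / (real n)\<^sup>2) * (16 * \<gamma>\<^sup>2 * (\<Sum>j\<in>{1..n}. \<Sum>k\<in>{1..n}. E j k * Pb j k))"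
    unfolding pK using pp by (simp add: field_simps)
  also have "\<dots> = (1 / (real n)\<^sup>2) * (\<Sum>j\<in>{1..n}. \<Sum>k\<in>{1..n}. gt \<gamma> j k)"
    unfolding gt by (simp add: sum_distrib_left)
  finally show ?thesis .
qed

definition "ht \<gamma> j k = 16 * \<gamma>\<^sup>2 * (exp (cc j k / (4*\<gamma>)) * (Yv j \<bullet> Yv k + (2 * real CARD('d) - 2 * cc j k) / (4*\<gamma>) + (4 * cc j k) / (16 * \<gamma>\<^sup>2))
    - Yv j \<bullet> Yv k - (Yv j \<bullet> Yv k * cc j k + (2 * real CARD('d) - 2 * cc j k)) / (4*\<gamma>))"

lemma sum_gt_ht:
  assumes g: "\<gamma> > 0"
  shows "(\<Sum>j\<in>{1..n}. \<Sum>k\<in>{1..n}. gt \<gamma> j k) = (\<Sum>j\<in>{1..n}. \<Sum>k\<in>{1..n}. ht \<gamma> j k)"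
proof -
  have pt: "gt \<gamma> j k = ht \<gamma> j k + 16 * \<gamma>\<^sup>2 * (Yv j \<bullet> Yv k)
      + (4 * \<gamma>) * (Yv j \<bullet> Yv k * cc j k + (2 * real CARD('d) - 2 * cc j k))" for j k
    unfolding gt_def ht_def using g by (simp add: field_simps power2_eq_square)
  have z1: "(\<Sum>j\<in>{1..n}. \<Sum>k\<in>{1..n}. Yv j \<bullet> Yv k) = 0" by (rule AL1[OF pd nge])
  have z2: "(\<Sum>j\<in>{1..n}. \<Sum>k\<in>{1..n}. Yv j \<bullet> Yv k * cc j k + (2 * real CARD('d) - 2 * cc j k)) = 0"
    unfolding cc_def by (rule AL2[OF pd nge])
  have dadd: "\<And>f g. (\<Sum>j\<in>{1..n}. \<Sum>k\<in>{1..n}. f j k + g j k) = (\<Sum>j\<in>{1..n}. \<Sum>k\<in>{1..n}. f j k) + (\<Sum>j\<in>{1..n}. \<Sum>k\<in>{1..n}. (g j k :: real))"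
    by (simp add: sum.distrib)
  have dmul: "\<And>c f. (\<Sum>j\<in>{1..n}. \<Sum>k\<in>{1..n}. c * f j k) = c * (\<Sum>j\<in>{1..n}. \<Sum>k\<in>{1..n}. (f j k :: real))"
    by (simp add: sum_distrib_left)
  have z2': "(\<Sum>j\<in>{1..n}. \<Sum>k\<in>{1..n}. Yv j \<bullet> Yv k * cc j k) + (\<Sum>j\<in>{1..n}. \<Sum>k\<in>{1..n}. 2 * real CARD('d) - 2 * cc j k) = 0"
    using z2 by (simp only: dadd)
  have "(\<Sum>j\<in>{1..n}. \<Sum>k\<in>{1..n}. gt \<gamma> j k) = (\<Sum>j\<in>{1..n}. \<Sum>k\<in>{1..n}. ht \<gamma> j k + (16 * \<gamma>\<^sup>2 * (Yv j \<bullet> Yv k)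
      + (4 * \<gamma>) * (Yv j \<bullet> Yv k * cc j k + (2 * real CARD('d) - 2 * cc j k))))"
    by (simp only: pt add.assoc)
  also have "\<dots> = (\<Sum>j\<in>{1..n}. \<Sum>k\<in>{1..n}. ht \<gamma> j k) + (16 * \<gamma>\<^sup>2 * 0 + (4 * \<gamma>) * 0)"
    by (simp only: dadd dmul z1 z2')
  finally show ?thesis by simp
qed

lemma final_lim:
  "((\<lambda>\<gamma>. \<gamma> powr (2 + real CARD('d) / 2) * (16 * test_stat n X \<gamma>) / (real n * pi powr (real CARD('d) / 2)))
     \<longlongrightarrow> 2 * b1 n X + b1_tilde n X) at_top"
proof -
  have ev: "eventually (\<lambda>\<gamma>. (1 / (real n)\<^sup>2) * (\<Sum>j\<in>{1..n}. \<Sum>k\<in>{1..n}. ht \<gamma> j k) =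
      \<gamma> powr (2 + real CARD('d) / 2) * (16 * test_stat n X \<gamma>) / (real n * pi powr (real CARD('d) / 2))) at_top"
    using eventually_gt_at_top[of 0]
    by eventually_elim (simp only: expr_eq sum_gt_ht)
  have lim: "((\<lambda>\<gamma>. (1 / (real n)\<^sup>2) * (\<Sum>j\<in>{1..n}. \<Sum>k\<in>{1..n}. ht \<gamma> j k)) \<longlongrightarrow>
      (1 / (real n)\<^sup>2) * (\<Sum>j\<in>{1..n}. \<Sum>k\<in>{1..n}. Yv j \<bullet> Yv k * (cc j k)\<^sup>2 / 2 + (2 * real CARD('d) - 2 * cc j k) * cc j k + 4 * cc j k)) at_top"
    unfolding ht_def
    by (intro tendsto_mult tendsto_const tendsto_sum term_lim) (simp add: cc_def)
  have "(1 / (real n)\<^sup>2) * (\<Sum>j\<in>{1..n}. \<Sum>k\<in>{1..n}. Yv j \<bullet> Yv k * (cc j k)\<^sup>2 / 2 + (2 * real CARD('d) - 2 * cc j k) * cc j k + 4 * cc j k)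
      = 2 * b1 n X + b1_tilde n X"
    unfolding cc_def AL3[OF pd nge] using nge by simp
  with lim have "((\<lambda>\<gamma>. (1 / (real n)\<^sup>2) * (\<Sum>j\<in>{1..n}. \<Sum>k\<in>{1..n}. ht \<gamma> j k)) \<longlongrightarrow> 2 * b1 n X + b1_tilde n X) at_top"
    by simp
  with tendsto_cong[OF ev] show ?thesis by (rule iffD1)
qed

end


theorem mainTheorem8:
  fixes X :: "nat \<Rightarrow> real^'d" and n :: nat
  assumes "n \<ge> CARD('d) + 1"
    and "posdef (sample_cov n X)"
  shows "((\<lambda>\<gamma>. \<gamma> powr (2 + real CARD('d) / 2) * (16 * test_stat n X \<gamma>)
              / (real n * pi powr (real CARD('d) / 2)))
          \<longlongrightarrow> 2 * b1 n X + b1_tilde n X) at_top"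
  by (rule final_lim[OF assms(2) assms(1)])

end
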